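(* Suppose the setting below, with $\mu_{f/h}>0$, and suppose there is a norm $\|\cdot\|$ on $\mathbb{R}^d$ such that $h$ is $\mu_h$-strongly convex with respect to $\|\cdot\|$ (equivalently $h^*$ is $\mu_h^{-1}$-smooth w.r.t. the dual norm) and each $f_i$ is $L_f$-smooth with respect to $\|\cdot\|$ (equivalently $f_i^*$ is $L_f^{-1}$-strongly convex w.r.t. the dual norm). Then Bregman-SAGA run with the constant step size $\eta_t=\frac{\mu_h}{8L_f}$ satisfies, for all $t\ge0$, $$\mathbb{E}[\psi_t]\le\Big(1-\min\big(\tfrac{\mu_h\mu_{f/h}}{8L_f},\tfrac{1}{2n}\big)\Big)^t\psi_0.$$
   Context: Let $C\subseteq\mathbb{R}^d$ be a closed convex set and $h:\mathbb{R}^d\to\mathbb{R}\cup\{+\infty\}$ a function satisfying the standing assumption: $h$ is twice continuously differentiable and strictly convex on $\operatorname{int} C$, and for every $y\in\mathbb{R}^d$ the problem $\min_{x\in C} h(x)-x^\top y$ has a unique solution, which lies in $\operatorname{int} C$. For differentiable $\varphi$, $D_\varphi(x,y)=\varphi(x)-\varphi(y)-\nabla\varphi(y)^\top(x-y)$. $f=\frac1n\sum_{i=1}^nf_i$ with each $f_i$ convex and $L_{f/h}$-relatively smooth w.r.t. $h$ (i.e. $D_{f_i}\le L_{f/h}D_h$), and $f$ is $\mu_{f/h}$-relatively strongly convex w.r.t. $h$ (i.e. $D_f\ge\mu_{f/h}D_h$), on $\operatorname{int}\operatorname{dom}h$. The minimizer $x^\star$ of $f$ over $C$ lies in $\operatorname{int}C$.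 Bregman-SAGA: set $\phi_i^0=x_0\in\operatorname{int}C$ for all $i$; at iteration $t$, pick $i_t$ uniformly in $\{1,\dots,n\}$, set $g_t=\nabla f_{i_t}(x_t)-\nabla f_{i_t}(\phi^t_{i_t})+\frac1n\sum_{j=1}^n\nabla f_j(\phi^t_j)$, $x_{t+1}=\arg\min_x\{\eta_tg_t^\top x+D_h(x,x_t)\}$, $\phi^{t+1}_{i_t}=x_t$, $\phi^{t+1}_j=\phi^t_j$ for $j\ne i_t$. $H_t=\frac1n\sum_{i=1}^nD_{f_i}(\phi_i^t,x^\star)$ and $\psi_t=\frac{1}{\eta_t}D_h(x^\star,x_t)+\frac n2H_t$. *)

theory Defs
  imports "HOL-Analysis.Analysis"
begin

definition is_norm :: "('a::real_vector \<Rightarrow> real) \<Rightarrow> bool" where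
  "is_norm N \<longleftrightarrow> (\<forall>x. 0 \<le> N x) \<and> (\<forall>x. N x = 0 \<longleftrightarrow> x = 0)
     \<and> (\<forall>c x. N (c *\<^sub>R x) = \<bar>c\<bar> * N x) \<and> (\<forall>x y. N (x + y) \<le> N x + N y)"

definition dual_norm :: "('a::real_inner \<Rightarrow> real) \<Rightarrow> 'a \<Rightarrow> real" where
  "dual_norm N g = (SUP x\<in>{x. N x \<le> 1}. g \<bullet> x)"

definition strict_convex_on :: "'a::real_vector set \<Rightarrow> ('a \<Rightarrow> real) \<Rightarrow> bool" where
  "strict_convex_on S f \<longleftrightarrow> convex S \<and> (\<forall>x\<in>S. \<forall>y\<in>S. \<forall>u::real. x \<noteq> y \<and> 0 < u \<and> u < 1
      \<longrightarrow> f (u *\<^sub>R x + (1 - u) *\<^sub>R y) < u * f x + (1 - u) * f y)"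

definition bregman :: "('a::real_inner \<Rightarrow> real) \<Rightarrow> ('a \<Rightarrow> 'a) \<Rightarrow> 'a \<Rightarrow> 'a \<Rightarrow> real" where
  "bregman phi gphi x y = phi x - phi y - gphi y \<bullet> (x - y)"

text \<open>Bregman divergence of the extended-valued h (values in R \<union> {+\<infinity>}),
  at a point y where h is finite and differentiable with gradient gh y.\<close>
definition bregman_ext :: "('a::real_inner \<Rightarrow> ereal) \<Rightarrow> ('a \<Rightarrow> 'a) \<Rightarrow> 'a \<Rightarrow> 'a \<Rightarrow> ereal" where
  "bregman_ext h gh x y = h x - ereal (real_of_ereal (h y) + gh y \<bullet> (x - y))"

text \<open>One Bregman-SAGA step with step size eta and sampled index i.
  State: (x_t, phi^t).  Indices range over {0..<n}.\<close>
definition saga_grad :: "nat \<Rightarrow> (nat \<Rightarrow> 'a \<Rightarrow> 'a::real_inner) \<Rightarrow> 'a \<times> (nat \<Rightarrow> 'a) \<Rightarrow> nat \<Rightarrow> 'a" where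
  "saga_grad n gf st i = gf i (fst st) - gf i (snd st i)
     + (1 / real n) *\<^sub>R (\<Sum>j<n. gf j (snd st j))"

definition saga_step :: "'a::real_inner set \<Rightarrow> ('a \<Rightarrow> ereal) \<Rightarrow> ('a \<Rightarrow> 'a) \<Rightarrow> nat
    \<Rightarrow> (nat \<Rightarrow> 'a \<Rightarrow> 'a) \<Rightarrow> real \<Rightarrow> 'a \<times> (nat \<Rightarrow> 'a) \<Rightarrow> nat \<Rightarrow> 'a \<times> (nat \<Rightarrow> 'a)" where
  "saga_step C h gh n gf eta st i =
     (let g = saga_grad n gf st i;
          obj = (\<lambda>z. ereal (eta * (g \<bullet> z)) + bregman_ext h gh z (fst st))
      in ((THE z. z \<in> C \<and> (\<forall>w\<in>C. obj z \<le> obj w)), (snd st)(i := fst st)))"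

definition saga_run :: "'a::real_inner set \<Rightarrow> ('a \<Rightarrow> ereal) \<Rightarrow> ('a \<Rightarrow> 'a) \<Rightarrow> nat
    \<Rightarrow> (nat \<Rightarrow> 'a \<Rightarrow> 'a) \<Rightarrow> real \<Rightarrow> 'a \<Rightarrow> nat list \<Rightarrow> 'a \<times> (nat \<Rightarrow> 'a)" where
  "saga_run C h gh n gf eta x0 is = foldl (saga_step C h gh n gf eta) (x0, (\<lambda>_. x0)) is"

definition saga_psi :: "('a::real_inner \<Rightarrow> real) \<Rightarrow> ('a \<Rightarrow> 'a) \<Rightarrow> nat \<Rightarrow> (nat \<Rightarrow> 'a \<Rightarrow> real)
    \<Rightarrow> (nat \<Rightarrow> 'a \<Rightarrow> 'a) \<Rightarrow> real \<Rightarrow> 'a \<Rightarrow> 'a \<times> (nat \<Rightarrow> 'a) \<Rightarrow> real" where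
  "saga_psi hr gh n f gf eta xstar st =
     (1 / eta) * bregman hr gh xstar (fst st)
     + real n / 2 * ((1 / real n) * (\<Sum>i<n. bregman (f i) (gf i) (snd st i) xstar))"

text \<open>Expectation of psi_t: i_0,...,i_{t-1} i.i.d. uniform on {0..<n}, i.e. the
  average over all n^t index sequences of length t.\<close>
definition saga_expected_psi :: "'a::real_inner set \<Rightarrow> ('a \<Rightarrow> ereal) \<Rightarrow> ('a \<Rightarrow> 'a) \<Rightarrow> nat
    \<Rightarrow> (nat \<Rightarrow> 'a \<Rightarrow> real) \<Rightarrow> (nat \<Rightarrow> 'a \<Rightarrow> 'a) \<Rightarrow> real \<Rightarrow> 'a \<Rightarrow> 'a \<Rightarrow> nat \<Rightarrow> real" where
  "saga_expected_psi C h gh n f gf eta x0 xstar t =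
     (\<Sum>is\<in>{is. length is = t \<and> set is \<subseteq> {..<n}}.
        saga_psi (\<lambda>x. real_of_ereal (h x)) gh n f gf eta xstar (saga_run C h gh n gf eta x0 is))
     / real n ^ t"

end

theory Submission
  imports Defs
begin


lemma isnorm_facts:
  assumes "is_norm N"
  shows "N 0 = 0" "\<And>x. N x \<ge> 0" "\<And>x y. N (x + y) \<le> N x + N y"
    "\<And>c x. N (c *\<^sub>R x) = \<bar>c\<bar> * N x" "\<And>x. N (- x) = N x" "\<And>x. N x = 0 \<longleftrightarrow> x = 0"
proof -
  show "N 0 = 0" "\<And>x. N x \<ge> 0" "\<And>x y. N (x + y) \<le> N x + N y"
    "\<And>c x. N (c *\<^sub>R x) = \<bar>c\<bar> * N x" "\<And>x. N x = 0 \<longleftrightarrow> x = 0"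
    using assms unfolding is_norm_def by auto
  fix x show "N (- x) = N x" using assms unfolding is_norm_def
    by (metis abs_minus_cancel abs_one mult_1 scaleR_minus1_left)
qed

lemma isnorm_sum:
  assumes "is_norm N" "finite A"
  shows "N (\<Sum>i\<in>A. g i) \<le> (\<Sum>i\<in>A. N (g i))"
  using assms(2)
proof (induction A rule: finite_induct)
  case empty then show ?case using isnorm_facts(1)[OF assms(1)] by simp
next
  case (insert a A)
  then show ?case using isnorm_facts(3)[OF assms(1), of "g a" "sum g A"] by simp
qed

lemma isnorm_upper:
  fixes N :: "'a::euclidean_space \<Rightarrow> real"
  assumes "is_norm N"
  shows "\<exists>K. \<forall>v. N v \<le> K * norm v"
proof -
  define K where "K = (\<Sum>b\<in>Basis. N (b::'a))"
  have "N v \<le> K * norm v" for v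
  proof -
    have "N v = N (\<Sum>b\<in>Basis. inner v b *\<^sub>R b)" by (simp add: euclidean_representation)
    also have "\<dots> \<le> (\<Sum>b\<in>Basis. N (inner v b *\<^sub>R b))" by (rule isnorm_sum[OF assms]) simp
    also have "\<dots> = (\<Sum>b\<in>Basis. \<bar>inner v b\<bar> * N b)" using isnorm_facts(4)[OF assms] by simp
    also have "\<dots> \<le> (\<Sum>b\<in>Basis. norm v * N b)"
      by (intro sum_mono mult_right_mono Basis_le_norm isnorm_facts(2)[OF assms])
    also have "\<dots> = K * norm v" by (simp add: K_def sum_distrib_left mult.commute)
    finally show ?thesis .
  qed
  then show ?thesis by blast
qed

lemma isnorm_lower:
  fixes N :: "'a::euclidean_space \<Rightarrow> real"
  assumes N: "is_norm N"
  shows "\<exists>c>0. \<forall>v. c * norm v \<le> N v"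
proof -
  obtain K where K: "\<And>v. N v \<le> K * norm v" using isnorm_upper[OF N] by blast
  have K0: "K \<ge> 0"
  proof -
    obtain b :: 'a where "b \<in> Basis" using nonempty_Basis by blast
    then have "norm b = 1" by simp
    then show ?thesis using K[of b] isnorm_facts(2)[OF N, of b] by simp
  qed
  have lip: "\<bar>N x - N y\<bar> \<le> K * norm (x - y)" for x y
  proof -
    have "N x \<le> N y + N (x - y)" using isnorm_facts(3)[OF N, of y "x - y"] by simp
    moreover have "N y \<le> N x + N (y - x)" using isnorm_facts(3)[OF N, of x "y - x"] by simp
    moreover have "N (y - x) = N (x - y)" using isnorm_facts(5)[OF N, of "x - y"] by simp
    ultimately show ?thesis using K[of "x - y"] by linarith
  qed
  have cont: "continuous_on UNIV N"
    unfolding continuous_on_iff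
  proof (intro ballI allI impI)
    fix x :: 'a and e :: real assume e: "e > 0"
    show "\<exists>d>0. \<forall>x'\<in>UNIV. dist x' x < d \<longrightarrow> dist (N x') (N x) < e"
    proof (intro exI[of _ "e / (K + 1)"] conjI ballI impI)
      show "e / (K + 1) > 0" using e K0 by simp
      fix x' assume "dist x' x < e / (K + 1)"
      then have "norm (x' - x) * (K + 1) < e" using K0 by (simp add: dist_norm pos_less_divide_eq)
      moreover have "K * norm (x' - x) \<le> norm (x' - x) * (K + 1)" by (simp add: algebra_simps)
      ultimately show "dist (N x') (N x) < e" using lip[of x' x] by (simp add: dist_real_def)
    qed
  qed
  have ne: "sphere (0::'a) 1 \<noteq> {}"
  proof -
    obtain b :: 'a where "b \<in> Basis" using nonempty_Basis by blast
    then show ?thesis by (intro notI) (auto simp: set_eq_iff dest: spec[of _ b])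
  qed
  obtain m where m: "m \<in> sphere 0 1" "\<And>y. y \<in> sphere 0 1 \<Longrightarrow> N m \<le> N y"
    using continuous_attains_inf[OF compact_sphere ne continuous_on_subset[OF cont]] by blast
  have c0: "N m > 0" using m(1) isnorm_facts(2,6)[OF N, of m] by fastforce
  have "N m * norm v \<le> N v" for v
  proof (cases "v = 0")
    case True then show ?thesis using isnorm_facts(1)[OF N] by simp
  next
    case False
    have "N m \<le> N ((1 / norm v) *\<^sub>R v)" using m(2) False by simp
    also have "\<dots> = N v / norm v" using isnorm_facts(4)[OF N] by simp
    finally show ?thesis using False by (simp add: pos_le_divide_eq)
  qed
  then show ?thesis using c0 by blast
qed

lemma dual_norm_bdd:
  fixes N :: "'a::euclidean_space \<Rightarrow> real"
  assumes N: "is_norm N"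
  shows "bdd_above ((\<lambda>x. g \<bullet> x) ` {x. N x \<le> 1})"
proof -
  obtain c where c: "c > 0" "\<And>v. c * norm v \<le> N v" using isnorm_lower[OF N] by blast
  have "g \<bullet> x \<le> norm g / c" if "N x \<le> 1" for x
  proof -
    have "norm x \<le> 1 / c" using c(2)[of x] that c(1) by (simp add: pos_le_divide_eq mult.commute)
    then have "norm g * norm x \<le> norm g * (1 / c)" by (intro mult_left_mono) simp_all
    then have "norm g * norm x \<le> norm g / c" by simp
    then show ?thesis using Cauchy_Schwarz_ineq2[of g x] by (simp add: abs_le_iff)
  qed
  then show ?thesis by (auto simp: bdd_above_def)
qed

lemma dual_norm_nonneg:
  fixes N :: "'a::euclidean_space \<Rightarrow> real"
  assumes N: "is_norm N"
  shows "dual_norm N g \<ge> 0"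
proof -
  have "0 \<in> {x. N x \<le> 1}" using isnorm_facts(1)[OF N] by simp
  then have "g \<bullet> 0 \<le> dual_norm N g" unfolding dual_norm_def
    by (rule cSUP_upper[OF _ dual_norm_bdd[OF N]])
  then show ?thesis by simp
qed

lemma dual_norm_ineq:
  fixes N :: "'a::euclidean_space \<Rightarrow> real"
  assumes N: "is_norm N"
  shows "g \<bullet> v \<le> dual_norm N g * N v"
proof (cases "v = 0")
  case True then show ?thesis using isnorm_facts(1)[OF N] by simp
next
  case False
  then have pos: "N v > 0" using isnorm_facts(2,6)[OF N, of v] by fastforce
  have "(1 / N v) *\<^sub>R v \<in> {x. N x \<le> 1}" using isnorm_facts(4)[OF N] pos by simp
  then have "g \<bullet> ((1 / N v) *\<^sub>R v) \<le> dual_norm N g" unfolding dual_norm_def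
    by (rule cSUP_upper[OF _ dual_norm_bdd[OF N]])
  then show ?thesis using pos by (simp add: divide_le_eq mult.commute)
qed

lemma dual_norm_least:
  fixes N :: "'a::euclidean_space \<Rightarrow> real"
  assumes N: "is_norm N" and "\<And>x. N x \<le> 1 \<Longrightarrow> g \<bullet> x \<le> B"
  shows "dual_norm N g \<le> B"
  unfolding dual_norm_def using assms(2) isnorm_facts(1)[OF N]
  by (intro cSUP_least) (auto intro!: exI[of _ 0])




lemma convex_tangent:
  fixes f :: "'a::euclidean_space \<Rightarrow> real"
  assumes cv: "convex_on UNIV f" and d: "\<And>x. (f has_derivative (\<lambda>w. G x \<bullet> w)) (at x)"
  shows "f z \<ge> f v + G v \<bullet> (z - v)"
proof -
  define k where "k t = f (v + t *\<^sub>R (z - v))" for t :: real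
  have ck: "convex_on UNIV k"
  proof (rule convex_onI)
    fix t x y :: real assume t: "t > 0" "t < 1"
    have "k ((1 - t) *\<^sub>R x + t *\<^sub>R y) = f ((1 - t) *\<^sub>R (v + x *\<^sub>R (z - v)) + t *\<^sub>R (v + y *\<^sub>R (z - v)))"
      unfolding k_def by (simp add: algebra_simps)
    also have "\<dots> \<le> (1 - t) * k x + t * k y" unfolding k_def
      using convex_onD[OF cv, of t] t by simp
    finally show "k ((1 - t) *\<^sub>R x + t *\<^sub>R y) \<le> (1 - t) * k x + t * k y" .
  qed simp
  have h1: "((\<lambda>t. v + t *\<^sub>R (z - v)) has_derivative (\<lambda>t. t *\<^sub>R (z - v))) (at 0)"
    by (intro derivative_eq_intros) auto
  have "(k has_derivative (\<lambda>t. G (v + 0 *\<^sub>R (z - v)) \<bullet> (t *\<^sub>R (z - v)))) (at 0)"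
    unfolding k_def by (rule has_derivative_compose[OF h1 d[of "v + 0 *\<^sub>R (z - v)"]])
  then have "(k has_derivative (\<lambda>t. G v \<bullet> (t *\<^sub>R (z - v)))) (at 0)" by simp
  then have "(k has_derivative (\<lambda>t. (G v \<bullet> (z - v)) * t)) (at 0)"
    by (rule has_derivative_eq_rhs) (simp add: fun_eq_iff mult.commute)
  then have "(k has_field_derivative (G v \<bullet> (z - v))) (at 0 within UNIV)"
    unfolding has_field_derivative_def by simp
  from convex_on_imp_above_tangent[OF ck _ _ _ this, of 1]
  have "k 1 - k 0 \<ge> G v \<bullet> (z - v) * (1 - 0)" by simp
  then show ?thesis unfolding k_def by simp
qed

lemma descent:
  fixes f :: "'a::euclidean_space \<Rightarrow> real"
  assumes N: "is_norm N" and d: "\<And>x. (f has_derivative (\<lambda>w. G x \<bullet> w)) (at x)"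
    and L: "\<And>x y. dual_norm N (G x - G y) \<le> L * N (x - y)"
  shows "f (x + e) \<le> f x + G x \<bullet> e + L / 2 * (N e)\<^sup>2"
proof -
  define k where "k s = f (x + s *\<^sub>R e) - s * (G x \<bullet> e) - L / 2 * s\<^sup>2 * (N e)\<^sup>2" for s :: real
  have "k 0 \<ge> k 1"
  proof (rule DERIV_nonpos_imp_nonincreasing[of 0 1 k])
    fix s :: real assume s: "0 \<le> s" "s \<le> 1"
    have "((\<lambda>s. x + s *\<^sub>R e) has_derivative (\<lambda>t. t *\<^sub>R e)) (at s)"
      by (intro derivative_eq_intros) auto
    then have d0: "((\<lambda>s. f (x + s *\<^sub>R e)) has_derivative (\<lambda>t. G (x + s *\<^sub>R e) \<bullet> (t *\<^sub>R e))) (at s)"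
      by (rule has_derivative_compose[OF _ d])
    have d1: "((\<lambda>s. f (x + s *\<^sub>R e)) has_derivative (\<lambda>t. t * (G (x + s *\<^sub>R e) \<bullet> e))) (at s)"
      by (rule has_derivative_eq_rhs[OF d0]) (simp add: fun_eq_iff)
    have d2: "((\<lambda>s. s * (G x \<bullet> e) + L / 2 * s\<^sup>2 * (N e)\<^sup>2) has_derivative (\<lambda>t. t * (G x \<bullet> e) + L / 2 * (2 * s * t) * (N e)\<^sup>2)) (at s)"
      by (intro derivative_eq_intros) (auto simp: power2_eq_square)
    have "(k has_derivative (\<lambda>t. t * (G (x + s *\<^sub>R e) \<bullet> e) - (t * (G x \<bullet> e) + L / 2 * (2 * s * t) * (N e)\<^sup>2))) (at s)"
      using has_derivative_diff[OF d1 d2] unfolding k_def by (simp add: algebra_simps)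
    then have "(k has_derivative (\<lambda>t. (G (x + s *\<^sub>R e) \<bullet> e - G x \<bullet> e - L * s * (N e)\<^sup>2) * t)) (at s)"
      by (rule has_derivative_eq_rhs) (simp add: fun_eq_iff algebra_simps)
    then have "DERIV k s :> (G (x + s *\<^sub>R e) \<bullet> e - G x \<bullet> e - L * s * (N e)\<^sup>2)"
      unfolding has_field_derivative_def by simp
    moreover have "G (x + s *\<^sub>R e) \<bullet> e - G x \<bullet> e - L * s * (N e)\<^sup>2 \<le> 0"
    proof -
      have "G (x + s *\<^sub>R e) \<bullet> e - G x \<bullet> e = (G (x + s *\<^sub>R e) - G x) \<bullet> e" by (simp add: inner_diff_left)
      also have "\<dots> \<le> dual_norm N (G (x + s *\<^sub>R e) - G x) * N e" by (rule dual_norm_ineq[OF N])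
      also have "\<dots> \<le> L * N (s *\<^sub>R e) * N e"
        using L[of "x + s *\<^sub>R e" x] isnorm_facts(2)[OF N, of e] by (simp add: mult_right_mono)
      also have "\<dots> = L * s * (N e)\<^sup>2" using isnorm_facts(4)[OF N, of s e] s by (simp add: power2_eq_square)
      finally show ?thesis by simp
    qed
    ultimately show "\<exists>y. DERIV k s :> y \<and> y \<le> 0" by blast
  qed simp
  then show ?thesis unfolding k_def by simp
qed

lemma smooth_bregman:
  fixes f :: "'a::euclidean_space \<Rightarrow> real"
  assumes N: "is_norm N" and d: "\<And>x. (f has_derivative (\<lambda>w. G x \<bullet> w)) (at x)"
    and L: "\<And>x y. dual_norm N (G x - G y) \<le> L * N (x - y)" and L0: "L > 0"
    and cv: "convex_on UNIV f"
  shows "(dual_norm N (G u - G v))\<^sup>2 \<le> 2 * L * bregman f G u v"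
proof -
  define D where "D = bregman f G u v"
  have D0: "D \<ge> 0" unfolding D_def bregman_def using convex_tangent[OF cv d, where z=u and v=v] by simp
  have "dual_norm N (G u - G v) \<le> sqrt (2 * L * D)"
  proof (rule dual_norm_least[OF N])
    fix e assume e: "N e \<le> 1"
    define q where "q = (G u - G v) \<bullet> e"
    show "(G u - G v) \<bullet> e \<le> sqrt (2 * L * D)"
    proof (cases "q \<le> 0")
      case True then show ?thesis using q_def by (smt (verit) real_sqrt_ge_zero D0 L0 mult_nonneg_nonneg)
    next
      case False
      define dd where "dd = (- q / L) *\<^sub>R e"
      have t1: "f (u + dd) \<ge> f v + G v \<bullet> (u + dd - v)" by (rule convex_tangent[OF cv d])
      have t2: "f (u + dd) \<le> f u + G u \<bullet> dd + L / 2 * (N dd)\<^sup>2" by (rule descent[OF N d L])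
      have "N dd = \<bar>- q / L\<bar> * N e" unfolding dd_def by (rule isnorm_facts(4)[OF N])
      also have "\<dots> = q / L * N e" using False L0 by simp
      also have "\<dots> \<le> q / L * 1" using e False L0 by (intro mult_left_mono) auto
      finally have Ndd: "N dd \<le> q / L" by simp
      have "(N dd)\<^sup>2 \<le> (q / L)\<^sup>2" using Ndd isnorm_facts(2)[OF N, of dd] by (simp add: power_mono)
      then have t3: "L / 2 * (N dd)\<^sup>2 \<le> L / 2 * (q / L)\<^sup>2" using L0 by simp
      have t4: "(G u - G v) \<bullet> dd = - q\<^sup>2 / L" unfolding dd_def q_def by (simp add: power2_eq_square)
      have "0 \<le> D + (G u - G v) \<bullet> dd + L / 2 * (N dd)\<^sup>2"
        using t1 t2 unfolding D_def bregman_def by (simp add: inner_diff_left inner_diff_right inner_add_right)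
      then have "0 \<le> D - q\<^sup>2 / L + L / 2 * (q / L)\<^sup>2" using t3 t4 by simp
      also have "L / 2 * (q / L)\<^sup>2 = q\<^sup>2 / (2 * L)" using L0 by (simp add: power2_eq_square field_simps)
      finally have "q\<^sup>2 \<le> 2 * L * D" using L0 by (simp add: field_simps)
      then have "q \<le> sqrt (2 * L * D)" using False by (simp add: real_le_rsqrt)
      then show ?thesis using q_def by simp
    qed
  qed
  then have "(dual_norm N (G u - G v))\<^sup>2 \<le> (sqrt (2 * L * D))\<^sup>2"
    using dual_norm_nonneg[OF N] by (intro power_mono) auto
  then show ?thesis using D0 L0 D_def by simp
qed




locale mirror =
  fixes C :: "'a::euclidean_space set" and h :: "'a \<Rightarrow> ereal" and gh :: "'a \<Rightarrow> 'a"
    and N :: "'a \<Rightarrow> real" and mu :: real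
  assumes h_range: "\<forall>x. h x \<noteq> -\<infinity>"
    and h_fin: "\<forall>x\<in>interior C. h x \<noteq> \<infinity>"
    and h_grad: "\<forall>x\<in>interior C.
        ((\<lambda>y. real_of_ereal (h y)) has_derivative (\<lambda>v. gh x \<bullet> v)) (at x)"
    and h_mirror: "\<forall>y. \<exists>!x. x \<in> C \<and> (\<forall>z\<in>C. h x - ereal (x \<bullet> y) \<le> h z - ereal (z \<bullet> y))"
    and h_mirror_int: "\<forall>y x. x \<in> C \<and> (\<forall>z\<in>C. h x - ereal (x \<bullet> y) \<le> h z - ereal (z \<bullet> y))
        \<longrightarrow> x \<in> interior C"
    and N: "is_norm N"
    and mu: "mu > 0"
    and h_sc: "\<forall>x\<in>interior C. \<forall>y\<in>interior C.
        real_of_ereal (h y) \<ge> real_of_ereal (h x) + gh x \<bullet> (y - x) + mu / 2 * (N (y - x))\<^sup>2"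
begin

definition hr where "hr x = real_of_ereal (h x)"

definition M where "M z = (THE x. x \<in> C \<and> (\<forall>w\<in>C. h x - ereal (x \<bullet> z) \<le> h w - ereal (w \<bullet> z)))"

definition hs where "hs z = M z \<bullet> z - hr (M z)"

lemma M_prop: "M z \<in> C \<and> (\<forall>w\<in>C. h (M z) - ereal (M z \<bullet> z) \<le> h w - ereal (w \<bullet> z))"
  unfolding M_def using theI'[OF h_mirror[rule_format, of z]] .

lemma M_int: "M z \<in> interior C"
  using M_prop h_mirror_int by blast

lemma h_eq: "x \<in> interior C \<Longrightarrow> h x = ereal (hr x)"
  unfolding hr_def using h_range h_fin by (cases "h x") auto

lemma M_min: "w \<in> interior C \<Longrightarrow> hr (M z) - M z \<bullet> z \<le> hr w - w \<bullet> z"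
proof -
  assume w: "w \<in> interior C"
  have "h (M z) - ereal (M z \<bullet> z) \<le> h w - ereal (w \<bullet> z)"
    using M_prop w interior_subset by blast
  then show ?thesis using h_eq[OF w] h_eq[OF M_int] by simp
qed

lemma M_grad: "gh (M z) = z"
proof -
  let ?x = "M z"
  define k where "k w = hr w - w \<bullet> z" for w
  have d: "(k has_derivative (\<lambda>v. gh ?x \<bullet> v - z \<bullet> v)) (at ?x)"
    unfolding k_def hr_def using h_grad M_int
    by (intro derivative_eq_intros) (auto simp: fun_eq_iff inner_commute)
  have "eventually (\<lambda>w. k ?x \<le> k w) (at ?x)"
  proof -
    have "eventually (\<lambda>w. w \<in> interior C) (at ?x)"
      using M_int by (intro eventually_at_in_open') auto
    then show ?thesis by eventually_elim (use M_min k_def in auto)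
  qed
  from has_derivative_local_min[OF d this]
  have "(\<lambda>v. gh ?x \<bullet> v - z \<bullet> v) = (\<lambda>v. 0)" .
  then have "gh ?x \<bullet> (gh ?x - z) - z \<bullet> (gh ?x - z) = 0" by metis
  then have "(gh ?x - z) \<bullet> (gh ?x - z) = 0" by (simp add: inner_diff_left)
  then show ?thesis by simp
qed

lemma hs_ge: "w \<in> interior C \<Longrightarrow> hs z \<ge> w \<bullet> z - hr w"
  unfolding hs_def using M_min[of w z] by simp

lemma hs_convex:
  assumes "0 \<le> t" "t \<le> 1"
  shows "hs ((1 - t) *\<^sub>R p + t *\<^sub>R q) \<le> (1 - t) * hs p + t * hs q"
proof -
  let ?m = "M ((1 - t) *\<^sub>R p + t *\<^sub>R q)"
  have "hs ((1 - t) *\<^sub>R p + t *\<^sub>R q) = (1 - t) * (?m \<bullet> p - hr ?m) + t * (?m \<bullet> q - hr ?m)"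
    unfolding hs_def by (simp add: inner_add_right algebra_simps)
  also have "\<dots> \<le> (1 - t) * hs p + t * hs q"
    using hs_ge[OF M_int, of _ p] hs_ge[OF M_int, of _ q] assms
    by (intro add_mono mult_left_mono) auto
  finally show ?thesis .
qed

lemma breg_sc: "x \<in> interior C \<Longrightarrow> y \<in> interior C \<Longrightarrow> bregman hr gh y x \<ge> mu / 2 * (N (y - x))\<^sup>2"
  unfolding bregman_def hr_def using h_sc by force

lemma breg_upper:
  assumes x: "x \<in> interior C" and x': "x' \<in> interior C"
    and K: "(gh x - gh x') \<bullet> (x - x') \<le> K * N (x - x')"
  shows "bregman hr gh x x' \<le> K\<^sup>2 / (2 * mu)"
proof -
  have sum: "bregman hr gh x x' + bregman hr gh x' x = (gh x - gh x') \<bullet> (x - x')"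
    unfolding bregman_def by (simp add: inner_diff_left inner_diff_right)
  have r: "N (x' - x) = N (x - x')" using isnorm_facts(5)[OF N, of "x - x'"] by simp
  have "bregman hr gh x' x \<ge> mu / 2 * (N (x - x'))\<^sup>2" using breg_sc[OF x x'] r by simp
  then have "bregman hr gh x x' \<le> K * N (x - x') - mu / 2 * (N (x - x'))\<^sup>2" using sum K by linarith
  also have "\<dots> \<le> K\<^sup>2 / (2 * mu)"
  proof -
    have "0 \<le> (K - mu * N (x - x'))\<^sup>2" by simp
    then show ?thesis using mu by (simp add: field_simps power2_eq_square)
  qed
  finally show ?thesis .
qed

lemma hs_breg: "hs z' - hs z - M z \<bullet> (z' - z) = bregman hr gh (M z) (M z')"
  unfolding hs_def bregman_def using M_grad[of z'] by (simp add: inner_diff_left inner_diff_right inner_commute)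

lemma hs_smooth:
  assumes K: "\<And>d. (z' - z) \<bullet> d \<le> K * N d"
  shows "hs z' \<le> hs z + M z \<bullet> (z' - z) + K\<^sup>2 / (2 * mu)"
proof -
  have "(gh (M z) - gh (M z')) \<bullet> (M z - M z') \<le> K * N (M z - M z')"
  proof -
    have "(gh (M z) - gh (M z')) \<bullet> (M z - M z') = (z' - z) \<bullet> (M z' - M z)"
      using M_grad by (simp add: inner_diff_left inner_diff_right inner_commute)
    also have "\<dots> \<le> K * N (M z' - M z)" by (rule K)
    also have "N (M z' - M z) = N (M z - M z')" using isnorm_facts(5)[OF N, of "M z - M z'"] by simp
    finally show ?thesis .
  qed
  from breg_upper[OF M_int M_int this] hs_breg[of z' z] show ?thesis by simp
qed

definition Phi where "Phi x u = hs (gh x + u) + hr x - x \<bullet> (gh x + u)"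

lemma Phi_breg: "Phi x u = bregman hr gh x (M (gh x + u))"
  unfolding Phi_def bregman_def hs_def using M_grad[of "gh x + u"]
  by (simp add: inner_diff_left inner_diff_right inner_commute)

lemma Phi_mid: "Phi x ((1/2) *\<^sub>R p + (1/2) *\<^sub>R q) \<le> (1/2) * Phi x p + (1/2) * Phi x q"
proof -
  have "hs ((1 - 1/2) *\<^sub>R (gh x + p) + (1/2) *\<^sub>R (gh x + q)) \<le> (1 - 1/2) * hs (gh x + p) + (1/2) * hs (gh x + q)"
    by (rule hs_convex) auto
  moreover have "(1 - 1/2) *\<^sub>R (gh x + p) + (1/2) *\<^sub>R (gh x + q) = gh x + ((1/2) *\<^sub>R p + (1/2) *\<^sub>R q)"
  proof -
    have "(1/2::real) *\<^sub>R gh x + (1/2) *\<^sub>R gh x = ((1/2 + 1/2)::real) *\<^sub>R gh x" by (rule scaleR_left_distrib[symmetric])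
    then show ?thesis by (simp add: algebra_simps)
  qed
  ultimately show ?thesis unfolding Phi_def by (simp add: inner_add_right algebra_simps)
qed

lemma Phi_upper:
  assumes x: "x \<in> interior C" and K: "\<And>d. u \<bullet> d \<le> K * N d"
  shows "Phi x u \<le> K\<^sup>2 / (2 * mu)"
proof -
  let ?x' = "M (gh x + u)"
  have "(gh x - gh ?x') \<bullet> (x - ?x') \<le> K * N (x - ?x')"
  proof -
    have "(gh x - gh ?x') \<bullet> (x - ?x') = u \<bullet> (?x' - x)"
      using M_grad by (simp add: inner_diff_left inner_diff_right inner_commute)
    also have "\<dots> \<le> K * N (?x' - x)" by (rule K)
    also have "N (?x' - x) = N (x - ?x')" using isnorm_facts(5)[OF N, of "x - ?x'"] by simp
    finally show ?thesis .
  qed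
  from breg_upper[OF x M_int this] show ?thesis using Phi_breg by simp
qed

lemma Phi_var:
  assumes x: "x \<in> interior C" and n: "n \<ge> 1"
    and K: "\<And>i d. i < n \<Longrightarrow> Y i \<bullet> d \<le> K i * N d"
  shows "(\<Sum>i<n. Phi x (Y i - (1 / real n) *\<^sub>R (\<Sum>j<n. Y j))) \<le> (\<Sum>i<n. (K i)\<^sup>2 / (2 * mu))"
proof -
  define Yb where "Yb = (1 / real n) *\<^sub>R (\<Sum>j<n. Y j)"
  define w where "w = gh x - Yb"
  have each: "Phi x (Y i - Yb) \<le> hs w + M w \<bullet> Y i + (K i)\<^sup>2 / (2 * mu) + hr x - x \<bullet> (gh x + (Y i - Yb))"
    if i: "i < n" for i
  proof -
    have hsm: "hs (w + Y i) \<le> hs w + M w \<bullet> (w + Y i - w) + (K i)\<^sup>2 / (2 * mu)"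
      by (rule hs_smooth) (use K[OF i] in simp)
    have eq: "gh x + (Y i - Yb) = w + Y i" unfolding w_def by simp
    show ?thesis unfolding Phi_def eq using hsm by simp
  qed
  define c where "c = hs w + hr x - x \<bullet> gh x + x \<bullet> Yb"
  have summand: "hs w + M w \<bullet> Y i + (K i)\<^sup>2 / (2 * mu) + hr x - x \<bullet> (gh x + (Y i - Yb))
      = c + (M w - x) \<bullet> Y i + (K i)\<^sup>2 / (2 * mu)" for i
    unfolding c_def by (simp add: inner_add_right inner_diff_right inner_diff_left)
  have "(\<Sum>i<n. Phi x (Y i - Yb)) \<le> (\<Sum>i<n. hs w + M w \<bullet> Y i + (K i)\<^sup>2 / (2 * mu) + hr x - x \<bullet> (gh x + (Y i - Yb)))"
    by (rule sum_mono) (use each in auto)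
  also have "\<dots> = (\<Sum>i<n. c + (M w - x) \<bullet> Y i + (K i)\<^sup>2 / (2 * mu))" by (rule sum.cong[OF refl summand])
  also have "\<dots> = real n * c + (M w - x) \<bullet> (\<Sum>i<n. Y i) + (\<Sum>i<n. (K i)\<^sup>2 / (2 * mu))"
    by (simp add: sum.distrib inner_sum_right)
  also have "(\<Sum>i<n. Y i) = real n *\<^sub>R Yb" unfolding Yb_def using n by simp
  finally have S: "(\<Sum>i<n. Phi x (Y i - Yb)) \<le> real n * (c + (M w - x) \<bullet> Yb) + (\<Sum>i<n. (K i)\<^sup>2 / (2 * mu))"
    by (simp add: algebra_simps)
  have neg: "c + (M w - x) \<bullet> Yb \<le> 0"
  proof -
    have "mu / 2 * (N (M w - x))\<^sup>2 \<ge> 0" using mu by simp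
    then have "hr (M w) \<ge> hr x + gh x \<bullet> (M w - x)"
      using h_sc[rule_format, OF x M_int[of w]] unfolding hr_def by linarith
    then show ?thesis unfolding hs_def w_def c_def by (simp add: inner_diff_right inner_diff_left inner_commute)
  qed
  have "real n * (c + (M w - x) \<bullet> Yb) \<le> 0" using neg by (simp add: mult_nonneg_nonpos)
  then show ?thesis using S unfolding Yb_def by linarith
qed

end




locale saga = mirror C h gh N mu
  for C :: "'a::euclidean_space set" and h gh N mu +
  fixes n :: nat and f :: "nat \<Rightarrow> 'a \<Rightarrow> real" and gf :: "nat \<Rightarrow> 'a \<Rightarrow> 'a"
    and mu_rel L :: real and xstar :: 'a
  assumes n: "n \<ge> 1"
    and f_grad: "\<forall>i<n. \<forall>x. (f i has_derivative (\<lambda>v. gf i x \<bullet> v)) (at x)"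
    and f_convex: "\<forall>i<n. convex_on UNIV (f i)"
    and rel_sc: "\<forall>x\<in>interior C. \<forall>y\<in>interior C.
        bregman (\<lambda>x. (\<Sum>i<n. f i x) / real n) (\<lambda>x. (1 / real n) *\<^sub>R (\<Sum>i<n. gf i x)) x y
          \<ge> mu_rel * bregman (\<lambda>x. real_of_ereal (h x)) gh x y"
    and mu_rel: "mu_rel > 0"
    and xstar: "xstar \<in> interior C" "\<forall>x\<in>C. (\<Sum>i<n. f i xstar) / real n \<le> (\<Sum>i<n. f i x) / real n"
    and L: "L > 0"
    and f_smooth: "\<forall>i<n. \<forall>x y. dual_norm N (gf i x - gf i y) \<le> L * N (x - y)"
begin

definition eta where "eta = mu / (8 * L)"

lemma eta_pos: "eta > 0" unfolding eta_def using mu L by simp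

lemma hr_eq: "(\<lambda>x. real_of_ereal (h x)) = hr" by (simp add: hr_def fun_eq_iff)

lemma grad_zero: "(\<Sum>i<n. gf i xstar) = 0"
proof -
  define F where "F x = (\<Sum>i<n. f i x) / real n" for x
  have d: "(F has_derivative (\<lambda>v. (\<Sum>i<n. gf i xstar \<bullet> v) / real n)) (at xstar)"
    unfolding F_def using f_grad n by (intro derivative_eq_intros) auto
  have "eventually (\<lambda>w. F xstar \<le> F w) (at xstar)"
  proof -
    have "eventually (\<lambda>w. w \<in> interior C) (at xstar)"
      using xstar(1) by (intro eventually_at_in_open') auto
    then show ?thesis by eventually_elim (use xstar(2) interior_subset in \<open>auto simp: F_def\<close>)
  qed
  from has_derivative_local_min[OF d this]
  have "(\<lambda>v. (\<Sum>i<n. gf i xstar \<bullet> v) / real n) = (\<lambda>v. 0)" .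
  then have "(\<Sum>i<n. gf i xstar \<bullet> (\<Sum>i<n. gf i xstar)) / real n = 0" by metis
  then have "(\<Sum>i<n. gf i xstar) \<bullet> (\<Sum>i<n. gf i xstar) = 0" using n by (simp add: inner_sum_left)
  then show ?thesis by simp
qed

lemma Df_nonneg: "i < n \<Longrightarrow> bregman (f i) (gf i) u v \<ge> 0"
  unfolding bregman_def using convex_tangent[where z=u and v=v, of "f i" "gf i"] f_convex f_grad by auto

lemma Df_smooth: "i < n \<Longrightarrow> (dual_norm N (gf i u - gf i v))\<^sup>2 \<le> 2 * L * bregman (f i) (gf i) u v"
  using smooth_bregman[OF N _ _ L, of "f i" "gf i"] f_grad f_smooth f_convex by auto

lemma step_eq:
  assumes x: "x \<in> interior C"
  shows "saga_step C h gh n gf eta (x, ph) i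
    = (M (gh x - eta *\<^sub>R saga_grad n gf (x, ph) i), ph(i := x))"
proof -
  define g where "g = saga_grad n gf (x, ph) i"
  define y where "y = gh x - eta *\<^sub>R g"
  define obj where "obj z = ereal (eta * (g \<bullet> z)) + bregman_ext h gh z x" for z
  define c where "c = gh x \<bullet> x - hr x"
  have objeq: "obj z = (h z - ereal (z \<bullet> y)) + ereal c" for z
  proof -
    have hx: "real_of_ereal (h x) = hr x" by (simp add: hr_def)
    have "h z \<noteq> -\<infinity>" using h_range by blast
    then show ?thesis unfolding obj_def bregman_ext_def hx c_def y_def
      by (cases "h z") (simp_all add: inner_diff_left inner_diff_right inner_commute algebra_simps)
  qed
  have iff: "obj z \<le> obj w \<longleftrightarrow> h z - ereal (z \<bullet> y) \<le> h w - ereal (w \<bullet> y)" for z w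
  proof -
    have "h z \<noteq> -\<infinity>" "h w \<noteq> -\<infinity>" using h_range by blast+
    then show ?thesis unfolding objeq by (cases "h z"; cases "h w") auto
  qed
  have "(THE z. z \<in> C \<and> (\<forall>w\<in>C. obj z \<le> obj w)) = M y"
    unfolding M_def iff ..
  then show ?thesis unfolding saga_step_def Let_def g_def[symmetric] y_def by (simp add: obj_def)
qed

end




lemma fin_arith:
  fixes X M B A S NS Q R1 R2 :: real
  assumes "X - M \<le> R1" "(NS - S) / 2 + S / 4 \<le> R2" "M \<le> B" "Q \<le> (A + S) / 4" "0 \<le> A"
  shows "X - (B + A) + Q + (NS - S + A) / 2 \<le> R1 + R2"
  using assms by (simp add: field_simps)

lemma split_aux:
  fixes a b bb :: "'b::real_vector"
  shows "- (e *\<^sub>R (a - b + bb)) = (1/2) *\<^sub>R (- (2 * e) *\<^sub>R a) + (1/2) *\<^sub>R ((2 * e) *\<^sub>R b - (2 * e) *\<^sub>R bb)"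
  by (simp add: algebra_simps)

context saga begin

lemma three_point:
  assumes "gh x' = gh x - v"
  shows "bregman hr gh xs x' = bregman hr gh xs x - v \<bullet> (x - xs) + bregman hr gh x x'"
  unfolding bregman_def assms by (simp add: inner_diff_left inner_diff_right inner_commute)

lemma sum_upd:
  fixes G :: "nat \<Rightarrow> 'a \<Rightarrow> real"
  assumes i: "i < n"
  shows "(\<Sum>j<n. G j ((ph(i := x)) j)) = (\<Sum>j<n. G j (ph j)) - G i (ph i) + G i x"
proof -
  have fin: "finite {..<n}" and iin: "i \<in> {..<n}" using i by auto
  have "(\<Sum>j<n. G j ((ph(i := x)) j)) = G i x + (\<Sum>j\<in>{..<n} - {i}. G j ((ph(i := x)) j))"
    using sum.remove[OF fin iin, of "\<lambda>j. G j ((ph(i := x)) j)"] by simp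
  also have "(\<Sum>j\<in>{..<n} - {i}. G j ((ph(i := x)) j)) = (\<Sum>j\<in>{..<n} - {i}. G j (ph j))"
    by (rule sum.cong) auto
  also have "\<dots> = (\<Sum>j<n. G j (ph j)) - G i (ph i)"
    using sum.remove[OF fin iin, of "\<lambda>j. G j (ph j)"] by linarith
  finally show ?thesis by simp
qed

definition rho where "rho = min (mu * mu_rel / (8 * L)) (1 / (2 * real n))"

lemma one_step:
  assumes x: "x \<in> interior C"
  shows "(\<Sum>i<n. saga_psi hr gh n f gf eta xstar (saga_step C h gh n gf eta (x, ph) i))
     \<le> real n * (1 - rho) * saga_psi hr gh n f gf eta xstar (x, ph)"
proof -
  have n0: "real n > 0" using n by simp
  define Dh where "Dh = bregman hr gh xstar x"
  define Di where "Di i u = bregman (f i) (gf i) u xstar" for i u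
  define A where "A = (\<Sum>i<n. Di i x)"
  define S where "S = (\<Sum>i<n. Di i (ph i))"
  define a where "a i = gf i x - gf i xstar" for i
  define b where "b i = gf i (ph i) - gf i xstar" for i
  define bb where "bb = (1 / real n) *\<^sub>R (\<Sum>j<n. b j)"
  define g where "g i = saga_grad n gf (x, ph) i" for i
  define x' where "x' i = M (gh x - eta *\<^sub>R g i)" for i
  define Y where "Y i = (2 * eta) *\<^sub>R b i" for i
  have A0: "A \<ge> 0" unfolding A_def Di_def by (intro sum_nonneg Df_nonneg) auto
  have S0: "S \<ge> 0" unfolding S_def Di_def by (intro sum_nonneg Df_nonneg) auto
  have Dh0: "Dh \<ge> 0"
  proof -
    have "mu / 2 * (N (xstar - x))\<^sup>2 \<ge> 0" using mu by simp
    then show ?thesis unfolding Dh_def using breg_sc[OF x xstar(1)] by linarith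
  qed
  have psi0: "saga_psi hr gh n f gf eta xstar (x, ph) = (1 / eta) * Dh + S / 2"
    unfolding saga_psi_def Dh_def S_def Di_def using n0 by simp
  have step: "saga_step C h gh n gf eta (x, ph) i = (x' i, ph(i := x))" for i
    unfolding x'_def g_def by (rule step_eq[OF x])
  have sumgph: "(1 / real n) *\<^sub>R (\<Sum>j<n. gf j (ph j)) = bb"
    unfolding bb_def b_def by (simp add: sum_subtractf grad_zero scaleR_diff_right)
  have gdec: "g i = a i - b i + bb" for i
    unfolding g_def saga_grad_def a_def b_def using sumgph by simp
  have tp: "bregman hr gh xstar (x' i) = Dh - (eta *\<^sub>R g i) \<bullet> (x - xstar) + Phi x (- (eta *\<^sub>R g i))" for i
  proof -
    have gg: "gh (x' i) = gh x - eta *\<^sub>R g i" unfolding x'_def by (rule M_grad)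
    have e: "gh x + - (eta *\<^sub>R g i) = gh x - eta *\<^sub>R g i" by simp
    have p: "Phi x (- (eta *\<^sub>R g i)) = bregman hr gh x (x' i)" unfolding Phi_breg x'_def e by (rule refl)
    show ?thesis unfolding p Dh_def by (rule three_point[OF gg])
  qed
  \<comment> \<open>variance bound\<close>
  have split: "- (eta *\<^sub>R g i) = (1/2) *\<^sub>R (- (2 * eta) *\<^sub>R a i) + (1/2) *\<^sub>R (Y i - (1 / real n) *\<^sub>R (\<Sum>j<n. Y j))" for i
  proof -
    have "(1 / real n) *\<^sub>R (\<Sum>j<n. Y j) = (2 * eta) *\<^sub>R bb"
      unfolding Y_def bb_def by (simp add: scaleR_sum_right)
    then show ?thesis unfolding gdec Y_def by (simp only: split_aux)
  qed
  have Phia: "Phi x (- (2 * eta) *\<^sub>R a i) \<le> (2 * eta * dual_norm N (a i))\<^sup>2 / (2 * mu)" for i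
  proof (rule Phi_upper[OF x])
    fix d
    have h0: "a i \<bullet> (- d) \<le> dual_norm N (a i) * N (- d)" by (rule dual_norm_ineq[OF N])
    have h1: "a i \<bullet> (- d) \<le> dual_norm N (a i) * N d" using h0 isnorm_facts(5)[OF N, of d] by simp
    have "(- (2 * eta) *\<^sub>R a i) \<bullet> d = 2 * eta * (a i \<bullet> (- d))"
      by (simp only: inner_scaleR_left inner_minus_right mult_minus_left mult_minus_right)
    also have "\<dots> \<le> 2 * eta * (dual_norm N (a i) * N d)"
      by (rule mult_left_mono[OF h1]) (use eta_pos in simp)
    finally show "(- (2 * eta) *\<^sub>R a i) \<bullet> d \<le> 2 * eta * dual_norm N (a i) * N d" by (simp only: mult.assoc)
  qed
  have Phib: "(\<Sum>i<n. Phi x (Y i - (1 / real n) *\<^sub>R (\<Sum>j<n. Y j))) \<le> (\<Sum>i<n. (2 * eta * dual_norm N (b i))\<^sup>2 / (2 * mu))"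
  proof (rule Phi_var[OF x n])
    fix i d assume "i < n"
    have "Y i \<bullet> d = 2 * eta * (b i \<bullet> d)" unfolding Y_def by (simp only: inner_scaleR_left)
    also have "\<dots> \<le> 2 * eta * (dual_norm N (b i) * N d)"
      by (rule mult_left_mono[OF dual_norm_ineq[OF N]]) (use eta_pos in simp)
    finally show "Y i \<bullet> d \<le> 2 * eta * dual_norm N (b i) * N d" by (simp only: mult.assoc)
  qed
  have Phisum: "(\<Sum>i<n. Phi x (- (eta *\<^sub>R g i))) \<le> eta / 4 * (A + S)"
  proof -
    have "(\<Sum>i<n. Phi x (- (eta *\<^sub>R g i))) \<le> (\<Sum>i<n. (1/2) * Phi x (- (2 * eta) *\<^sub>R a i) + (1/2) * Phi x (Y i - (1 / real n) *\<^sub>R (\<Sum>j<n. Y j)))"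
      unfolding split by (intro sum_mono Phi_mid)
    also have "\<dots> = (1/2) * (\<Sum>i<n. Phi x (- (2 * eta) *\<^sub>R a i)) + (1/2) * (\<Sum>i<n. Phi x (Y i - (1 / real n) *\<^sub>R (\<Sum>j<n. Y j)))"
      by (simp add: sum.distrib sum_distrib_left)
    also have "\<dots> \<le> (1/2) * (\<Sum>i<n. (2 * eta * dual_norm N (a i))\<^sup>2 / (2 * mu)) + (1/2) * (\<Sum>i<n. (2 * eta * dual_norm N (b i))\<^sup>2 / (2 * mu))"
      by (rule add_mono[OF mult_left_mono[OF sum_mono[OF Phia]] mult_left_mono[OF Phib]]) simp_all
    also have "\<dots> = eta\<^sup>2 / mu * (\<Sum>i<n. (dual_norm N (a i))\<^sup>2 + (dual_norm N (b i))\<^sup>2)"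
      by (simp add: sum.distrib sum_distrib_left power_mult_distrib power2_eq_square algebra_simps add_divide_distrib)
    also have "\<dots> \<le> eta\<^sup>2 / mu * (\<Sum>i<n. 2 * L * Di i x + 2 * L * Di i (ph i))"
      unfolding a_def b_def Di_def using mu
      by (intro mult_left_mono sum_mono add_mono Df_smooth) auto
    also have "(\<Sum>i<n. 2 * L * Di i x + 2 * L * Di i (ph i)) = 2 * L * (A + S)"
      unfolding A_def S_def by (simp add: sum.distrib sum_distrib_left distrib_left)
    also have "eta\<^sup>2 / mu * (2 * L * (A + S)) = (eta\<^sup>2 / mu * (2 * L)) * (A + S)" by (simp only: mult.assoc)
    also have "eta\<^sup>2 / mu * (2 * L) = eta / 4"
      unfolding eta_def using mu L by (simp add: power2_eq_square field_simps)
    finally show ?thesis .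
  qed
  have sumg: "(\<Sum>i<n. g i) = (\<Sum>i<n. gf i x)"
  proof -
    have "(\<Sum>i<n. g i) = (\<Sum>i<n. gf i x) - (\<Sum>i<n. gf i (ph i)) + (\<Sum>i<n. (1 / real n) *\<^sub>R (\<Sum>j<n. gf j (ph j)))"
      unfolding g_def saga_grad_def by (simp add: sum.distrib sum_subtractf)
    also have "(\<Sum>i<n. (1 / real n) *\<^sub>R (\<Sum>j<n. gf j (ph j))) = (\<Sum>j<n. gf j (ph j))"
      using n0 by (simp add: sum_constant_scaleR)
    finally show ?thesis by simp
  qed
  have lin0: "(\<Sum>i<n. (eta *\<^sub>R g i) \<bullet> (x - xstar)) = eta * ((\<Sum>i<n. g i) \<bullet> (x - xstar))"
    by (simp add: inner_sum_left sum_distrib_left)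
  have lin: "(\<Sum>i<n. (eta *\<^sub>R g i) \<bullet> (x - xstar)) = eta * ((\<Sum>i<n. gf i x) \<bullet> (x - xstar))"
    unfolding lin0 sumg ..
  define BF where "BF = bregman (\<lambda>x. (\<Sum>i<n. f i x) / real n) (\<lambda>x. (1 / real n) *\<^sub>R (\<Sum>i<n. gf i x)) xstar x"
  have BF: "BF \<ge> mu_rel * Dh" unfolding BF_def Dh_def using rel_sc xstar(1) x hr_eq by auto
  have Aeq: "A = (\<Sum>i<n. f i x) - (\<Sum>i<n. f i xstar)"
  proof -
    have "A = (\<Sum>i<n. f i x) - (\<Sum>i<n. f i xstar) - (\<Sum>i<n. gf i xstar) \<bullet> (x - xstar)"
      unfolding A_def Di_def bregman_def by (simp add: sum_subtractf inner_sum_left)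
    then show ?thesis using grad_zero by simp
  qed
  have BFeq: "(\<Sum>i<n. gf i x) \<bullet> (x - xstar) = real n * BF + A"
  proof -
    have "real n * BF = (\<Sum>i<n. f i xstar) - (\<Sum>i<n. f i x) - (\<Sum>i<n. gf i x) \<bullet> (xstar - x)"
      unfolding BF_def bregman_def using n0 by (simp add: algebra_simps)
    then show ?thesis using Aeq by (simp add: inner_diff_right)
  qed
  have psi_i: "saga_psi hr gh n f gf eta xstar (saga_step C h gh n gf eta (x, ph) i)
      = (1 / eta) * bregman hr gh xstar (x' i) + (S - Di i (ph i) + Di i x) / 2" if i: "i < n" for i
  proof -
    have "(\<Sum>j<n. Di j ((ph(i := x)) j)) = S - Di i (ph i) + Di i x"
      unfolding S_def by (rule sum_upd[OF i])
    then show ?thesis unfolding step saga_psi_def using n0 by (simp add: Di_def)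
  qed
  have "(\<Sum>i<n. saga_psi hr gh n f gf eta xstar (saga_step C h gh n gf eta (x, ph) i))
      = (\<Sum>i<n. (1 / eta) * bregman hr gh xstar (x' i) + (S - Di i (ph i) + Di i x) / 2)"
    using psi_i by simp
  also have "\<dots> = (\<Sum>i<n. (1 / eta) * Dh - (1 / eta) * ((eta *\<^sub>R g i) \<bullet> (x - xstar)) + (1 / eta) * Phi x (- (eta *\<^sub>R g i))
      + (S - Di i (ph i) + Di i x) / 2)"
    by (rule sum.cong[OF refl]) (simp only: tp ring_distribs)
  also have "\<dots> = (\<Sum>i<n. (1 / eta) * Dh) - (\<Sum>i<n. (1 / eta) * ((eta *\<^sub>R g i) \<bullet> (x - xstar)))
      + (\<Sum>i<n. (1 / eta) * Phi x (- (eta *\<^sub>R g i))) + (\<Sum>i<n. (S - Di i (ph i) + Di i x) / 2)"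
    by (simp only: sum.distrib sum_subtractf)
  also have "(\<Sum>i<n. (S - Di i (ph i) + Di i x) / 2) = (real n * S - S + A) / 2"
  proof -
    have "(\<Sum>i<n. (S - Di i (ph i) + Di i x)) = real n * S - S + A"
      unfolding A_def by (simp add: sum.distrib sum_subtractf S_def)
    then show ?thesis by (simp add: sum_divide_distrib[symmetric])
  qed
  also have "(\<Sum>i<n. (1 / eta) * Dh) = real n * ((1 / eta) * Dh)" by simp
  also have "(\<Sum>i<n. (1 / eta) * ((eta *\<^sub>R g i) \<bullet> (x - xstar))) = (1 / eta) * (\<Sum>i<n. (eta *\<^sub>R g i) \<bullet> (x - xstar))"
    by (simp only: sum_distrib_left)
  also have "(\<Sum>i<n. (1 / eta) * Phi x (- (eta *\<^sub>R g i))) = (1 / eta) * (\<Sum>i<n. Phi x (- (eta *\<^sub>R g i)))"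
    by (simp only: sum_distrib_left)
  also have "(1 / eta) * (\<Sum>i<n. (eta *\<^sub>R g i) \<bullet> (x - xstar)) = real n * BF + A"
    unfolding lin BFeq using eta_pos by simp
  finally have tot: "(\<Sum>i<n. saga_psi hr gh n f gf eta xstar (saga_step C h gh n gf eta (x, ph) i))
      = real n * ((1 / eta) * Dh) - (real n * BF + A) + (1 / eta) * (\<Sum>i<n. Phi x (- (eta *\<^sub>R g i))) + (real n * S - S + A) / 2" .
  have P: "(1 / eta) * (\<Sum>i<n. Phi x (- (eta *\<^sub>R g i))) \<le> (A + S) / 4"
    using Phisum eta_pos by (simp add: field_simps)
  have r1: "rho \<le> eta * mu_rel" unfolding rho_def eta_def by simp
  have r2: "rho \<le> 1 / (2 * real n)" unfolding rho_def by simp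
  have c1: "real n * ((1 / eta) * Dh) - real n * mu_rel * Dh \<le> real n * (1 - rho) * ((1 / eta) * Dh)"
  proof -
    have "rho * (1 / eta) \<le> mu_rel" using r1 eta_pos by (simp add: field_simps)
    then have "rho * (1 / eta) * Dh \<le> mu_rel * Dh" using Dh0 by (intro mult_right_mono) auto
    then have "real n * (rho * (1 / eta) * Dh) \<le> real n * (mu_rel * Dh)" using n0 by (intro mult_left_mono) auto
    then show ?thesis by (simp add: algebra_simps)
  qed
  have c2: "(real n * S - S) / 2 + S / 4 \<le> real n * (1 - rho) * (S / 2)"
  proof -
    have "real n * rho \<le> 1 / 2" using r2 n0 by (simp add: field_simps)
    then have h: "real n * rho * S \<le> 1 / 2 * S" using S0 by (intro mult_right_mono) auto
    have "real n * (1 - rho) * (S / 2) = real n * S / 2 - real n * rho * S / 2" by (simp add: algebra_simps)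
    then show ?thesis using h by (simp add: field_simps)
  qed
  have c3: "real n * BF \<ge> real n * mu_rel * Dh" using BF n0 by (simp add: mult_left_mono)
  have dist: "real n * (1 - rho) * ((1 / eta) * Dh + S / 2) = real n * (1 - rho) * ((1 / eta) * Dh) + real n * (1 - rho) * (S / 2)"
    by (simp only: distrib_left)
  show ?thesis unfolding tot psi0 dist by (rule fin_arith[OF c1 c2 c3 P A0])
qed

end




context saga begin

lemma run_snoc: "saga_run C h gh n gf eta x0 (is @ [i]) = saga_step C h gh n gf eta (saga_run C h gh n gf eta x0 is) i"
  unfolding saga_run_def by simp

lemma run_int:
  assumes x0: "x0 \<in> interior C"
  shows "fst (saga_run C h gh n gf eta x0 is) \<in> interior C"
proof (induction "is" rule: rev_induct)
  case Nil then show ?case using x0 by (simp add: saga_run_def)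
next
  case (snoc i "is")
  obtain x ph where st: "saga_run C h gh n gf eta x0 is = (x, ph)" by fastforce
  with snoc have "x \<in> interior C" by simp
  then show ?case unfolding run_snoc st step_eq[OF \<open>x \<in> interior C\<close>] by (simp add: M_int)
qed

definition Lt where "Lt t = {is. length is = t \<and> set is \<subseteq> {..<n}}"

lemma Lt_fin: "finite (Lt t)"
proof -
  have "Lt t = {is. set is \<subseteq> {..<n} \<and> length is = t}" unfolding Lt_def by auto
  then show ?thesis using finite_lists_length_eq[of "{..<n}" t] by simp
qed

lemma Lt_Suc: "Lt (Suc t) = (\<lambda>(is, i). is @ [i]) ` (Lt t \<times> {..<n})"
proof
  show "Lt (Suc t) \<subseteq> (\<lambda>(is, i). is @ [i]) ` (Lt t \<times> {..<n})"
  proof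
    fix xs assume xs: "xs \<in> Lt (Suc t)"
    then have ne: "xs \<noteq> []" unfolding Lt_def by auto
    have eq: "xs = butlast xs @ [last xs]" using ne by simp
    have "butlast xs \<in> Lt t" "last xs \<in> {..<n}" using xs ne unfolding Lt_def
      by (auto dest: in_set_butlastD) (metis last_in_set subsetD lessThan_iff)
    then show "xs \<in> (\<lambda>(is, i). is @ [i]) ` (Lt t \<times> {..<n})"
      using eq by (intro image_eqI[of _ _ "(butlast xs, last xs)"]) auto
  qed
  show "(\<lambda>(is, i). is @ [i]) ` (Lt t \<times> {..<n}) \<subseteq> Lt (Suc t)"
    unfolding Lt_def by auto
qed

lemma sum_Lt_Suc: "(\<Sum>is\<in>Lt (Suc t). G is) = (\<Sum>is\<in>Lt t. \<Sum>i<n. G (is @ [i]))"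
proof -
  have inj: "inj_on (\<lambda>(is, i). is @ [i]) (Lt t \<times> {..<n})"
    by (auto simp: inj_on_def)
  have "(\<Sum>is\<in>Lt (Suc t). G is) = (\<Sum>p\<in>Lt t \<times> {..<n}. G ((\<lambda>(is, i). is @ [i]) p))"
    unfolding Lt_Suc by (rule sum.reindex[OF inj, unfolded comp_def])
  also have "\<dots> = (\<Sum>is\<in>Lt t. \<Sum>i<n. G (is @ [i]))"
    by (simp add: sum.cartesian_product split_def)
  finally show ?thesis .
qed

lemma expected_step:
  assumes x0: "x0 \<in> interior C"
  shows "saga_expected_psi C h gh n f gf eta x0 xstar (Suc t) \<le> (1 - rho) * saga_expected_psi C h gh n f gf eta x0 xstar t"
proof -
  define P where "P is = saga_psi hr gh n f gf eta xstar (saga_run C h gh n gf eta x0 is)" for "is"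
  have E: "saga_expected_psi C h gh n f gf eta x0 xstar t' = (\<Sum>is\<in>Lt t'. P is) / real n ^ t'" for t'
    unfolding saga_expected_psi_def P_def Lt_def hr_eq ..
  have "(\<Sum>is\<in>Lt (Suc t). P is) = (\<Sum>is\<in>Lt t. \<Sum>i<n. P (is @ [i]))" by (rule sum_Lt_Suc)
  also have "\<dots> \<le> (\<Sum>is\<in>Lt t. real n * (1 - rho) * P is)"
  proof (rule sum_mono)
    fix "is" assume "is \<in> Lt t"
    obtain x ph where st: "saga_run C h gh n gf eta x0 is = (x, ph)" by fastforce
    have x: "x \<in> interior C" using run_int[OF x0, of "is"] st by simp
    show "(\<Sum>i<n. P (is @ [i])) \<le> real n * (1 - rho) * P is"
      unfolding P_def run_snoc st by (rule one_step[OF x])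
  qed
  also have "\<dots> = real n * (1 - rho) * (\<Sum>is\<in>Lt t. P is)" by (simp add: sum_distrib_left)
  finally have S: "(\<Sum>is\<in>Lt (Suc t). P is) \<le> real n * (1 - rho) * (\<Sum>is\<in>Lt t. P is)" .
  have n0: "real n > 0" using n by simp
  have "(\<Sum>is\<in>Lt (Suc t). P is) / real n ^ Suc t \<le> real n * (1 - rho) * (\<Sum>is\<in>Lt t. P is) / real n ^ Suc t"
    using S n0 by (intro divide_right_mono) auto
  also have "\<dots> = (1 - rho) * ((\<Sum>is\<in>Lt t. P is) / real n ^ t)" using n0 by (simp add: field_simps)
  finally show ?thesis unfolding E .
qed

lemma rho_le1: "1 - rho \<ge> 0"
proof -
  have "rho \<le> 1 / (2 * real n)" unfolding rho_def by simp
  also have "\<dots> \<le> 1" using n by (simp add: field_simps)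
  finally show ?thesis by simp
qed

lemma expected_all:
  assumes x0: "x0 \<in> interior C"
  shows "saga_expected_psi C h gh n f gf eta x0 xstar t \<le> (1 - rho) ^ t * saga_expected_psi C h gh n f gf eta x0 xstar 0"
proof (induction t)
  case 0 then show ?case by simp
next
  case (Suc t)
  have "saga_expected_psi C h gh n f gf eta x0 xstar (Suc t) \<le> (1 - rho) * saga_expected_psi C h gh n f gf eta x0 xstar t"
    by (rule expected_step[OF x0])
  also have "\<dots> \<le> (1 - rho) * ((1 - rho) ^ t * saga_expected_psi C h gh n f gf eta x0 xstar 0)"
    by (rule mult_left_mono[OF Suc rho_le1])
  finally show ?case by (simp add: mult.assoc)
qed

end


theorem corollary2:
  fixes C :: "'a::euclidean_space set"
    and h :: "'a \<Rightarrow> ereal" and gh :: "'a \<Rightarrow> 'a"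
    and n :: nat and f :: "nat \<Rightarrow> 'a \<Rightarrow> real" and gf :: "nat \<Rightarrow> 'a \<Rightarrow> 'a"
    and L_rel mu_rel :: real and N :: "'a \<Rightarrow> real" and mu_h L_f :: real
    and x0 xstar :: 'a
  assumes C: "closed C" "convex C"
    and h_range: "\<forall>x. h x \<noteq> -\<infinity>"
    and h_fin: "\<forall>x\<in>interior C. h x \<noteq> \<infinity>"
    and h_grad: "\<forall>x\<in>interior C.
        ((\<lambda>y. real_of_ereal (h y)) has_derivative (\<lambda>v. gh x \<bullet> v)) (at x)"
    and h_C2: "\<exists>H :: 'a \<Rightarrow> 'a \<Rightarrow>\<^sub>L 'a. (\<forall>x\<in>interior C. (gh has_derivative blinfun_apply (H x)) (at x))
        \<and> continuous_on (interior C) H"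
    and h_strict: "strict_convex_on (interior C) (\<lambda>x. real_of_ereal (h x))"
    and h_mirror: "\<forall>y. \<exists>!x. x \<in> C \<and> (\<forall>z\<in>C. h x - ereal (x \<bullet> y) \<le> h z - ereal (z \<bullet> y))"
    and h_mirror_int: "\<forall>y x. x \<in> C \<and> (\<forall>z\<in>C. h x - ereal (x \<bullet> y) \<le> h z - ereal (z \<bullet> y))
        \<longrightarrow> x \<in> interior C"
    and n: "n \<ge> 1"
    and f_grad: "\<forall>i<n. \<forall>x. (f i has_derivative (\<lambda>v. gf i x \<bullet> v)) (at x)"
    and f_convex: "\<forall>i<n. convex_on UNIV (f i)"
    and rel_smooth: "\<forall>i<n. \<forall>x\<in>interior C. \<forall>y\<in>interior C.
        bregman (f i) (gf i) x y \<le> L_rel * bregman (\<lambda>x. real_of_ereal (h x)) gh x y"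
    and rel_sc: "\<forall>x\<in>interior C. \<forall>y\<in>interior C.
        bregman (\<lambda>x. (\<Sum>i<n. f i x) / real n) (\<lambda>x. (1 / real n) *\<^sub>R (\<Sum>i<n. gf i x)) x y
          \<ge> mu_rel * bregman (\<lambda>x. real_of_ereal (h x)) gh x y"
    and mu_rel: "mu_rel > 0"
    and xstar: "xstar \<in> interior C" "\<forall>x\<in>C. (\<Sum>i<n. f i xstar) / real n \<le> (\<Sum>i<n. f i x) / real n"
    and x0: "x0 \<in> interior C"
    and N: "is_norm N"
    and mu_h: "mu_h > 0"
    and h_sc: "\<forall>x\<in>interior C. \<forall>y\<in>interior C.
        real_of_ereal (h y) \<ge> real_of_ereal (h x) + gh x \<bullet> (y - x) + mu_h / 2 * (N (y - x))\<^sup>2"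
    and L_f: "L_f > 0"
    and f_smooth: "\<forall>i<n. \<forall>x y. dual_norm N (gf i x - gf i y) \<le> L_f * N (x - y)"
  shows "\<forall>t. saga_expected_psi C h gh n f gf (mu_h / (8 * L_f)) x0 xstar t
     \<le> (1 - min (mu_h * mu_rel / (8 * L_f)) (1 / (2 * real n))) ^ t
        * saga_expected_psi C h gh n f gf (mu_h / (8 * L_f)) x0 xstar 0"
proof -
  interpret saga C h gh N mu_h n f gf mu_rel L_f xstar
    by unfold_locales (use C h_range h_fin h_grad h_mirror h_mirror_int n f_grad f_convex rel_sc mu_rel xstar
        N mu_h h_sc L_f f_smooth in auto)
  show ?thesis using expected_all[OF x0] unfolding eta_def rho_def by blast
qed

end
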